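(* Let $\alpha\in[0,1]$. (a) If $G$ is any graph and $H_1,H_2$ are $A_\alpha$-cospectral graphs with $\Gamma_{A_\alpha(H_1)}(x)=\Gamma_{A_\alpha(H_2)}(x)$, then $G\vee H_1$ and $G\vee H_2$ are $A_\alpha$-cospectral. (b) If $G_1,G_2$ are $A_\alpha$-cospectral graphs with $\Gamma_{A_\alpha(G_1)}(x)=\Gamma_{A_\alpha(G_2)}(x)$ and $H_1,H_2$ are $A_\alpha$-cospectral graphs with $\Gamma_{A_\alpha(H_1)}(x)=\Gamma_{A_\alpha(H_2)}(x)$, then $G_1\vee H_1$ and $G_2\vee H_2$ are $A_\alpha$-cospectral.
   Context: All graphs are finite, simple and undirected. For a graph $G$, $A(G)$ is its adjacency matrix, $D(G)$ its diagonal degree matrix, and $A_\alpha(G)=\alpha D(G)+(1-\alpha)A(G)$. Two graphs are $A_\alpha$-cospectral if $A_\alpha$ of each has the same multiset of eigenvalues. For an $n\times n$ matrix $M$, its coronal is $\Gamma_M(x)=\mathbf{1}_n^T(xI_n-M)^{-1}\mathbf{1}_n$ (a rational function of $x$), with $\mathbf{1}_n$ the all-ones vector. $G\vee H$ denotes the join: the disjoint union of $G$ and $H$ with all edges between $V(G)$ and $V(H)$ added. *)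

theory Defs
  imports "Jordan_Normal_Form.Char_Poly" "Jordan_Normal_Form.Gauss_Jordan_Elimination"
begin

text \<open>A finite simple graph with vertex set {0..<n}, given by an edge predicate E
  which is symmetric and irreflexive on the vertex set.\<close>
type_synonym graph = "nat \<times> (nat \<Rightarrow> nat \<Rightarrow> bool)"

definition nverts :: "graph \<Rightarrow> nat" where "nverts G = fst G"
definition adj :: "graph \<Rightarrow> nat \<Rightarrow> nat \<Rightarrow> bool" where "adj G = snd G"

definition simple_graph :: "graph \<Rightarrow> bool" where
  "simple_graph G \<longleftrightarrow>
     (\<forall>i<nverts G. \<forall>j<nverts G. adj G i j = adj G j i) \<and>
     (\<forall>i<nverts G. \<not> adj G i i)"

definition adj_matrix :: "graph \<Rightarrow> real mat" where
  "adj_matrix G = mat (nverts G) (nverts G) (\<lambda>(i,j). if adj G i j then 1 else 0)"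

definition degree :: "graph \<Rightarrow> nat \<Rightarrow> nat" where
  "degree G i = card {j. j < nverts G \<and> adj G i j}"

definition deg_matrix :: "graph \<Rightarrow> real mat" where
  "deg_matrix G = mat (nverts G) (nverts G) (\<lambda>(i,j). if i = j then real (degree G i) else 0)"

definition A_alpha :: "real \<Rightarrow> graph \<Rightarrow> real mat" where
  "A_alpha \<alpha> G = \<alpha> \<cdot>\<^sub>m deg_matrix G + (1 - \<alpha>) \<cdot>\<^sub>m adj_matrix G"

definition eigenvalues :: "real mat \<Rightarrow> complex multiset" where
  "eigenvalues M = proots (char_poly (map_mat complex_of_real M))"

definition A_alpha_cospectral :: "real \<Rightarrow> graph \<Rightarrow> graph \<Rightarrow> bool" where
  "A_alpha_cospectral \<alpha> G H \<longleftrightarrow> eigenvalues (A_alpha \<alpha> G) = eigenvalues (A_alpha \<alpha> H)"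

text \<open>Coronal evaluated at a real point x: 1^T (xI - M)^{-1} 1 (value 0 where xI - M is singular,
  i.e. at poles).\<close>
definition coronal :: "real mat \<Rightarrow> real \<Rightarrow> real" where
  "coronal M x = (case mat_inverse (x \<cdot>\<^sub>m 1\<^sub>m (dim_row M) - M) of
      Some B \<Rightarrow> vec (dim_row M) (\<lambda>_. 1) \<bullet> (B *\<^sub>v vec (dim_row M) (\<lambda>_. 1))
    | None \<Rightarrow> 0)"

text \<open>Equality of coronals as rational functions: they agree at every real x that is a pole of
  neither (i.e. x is an eigenvalue of neither matrix).\<close>
definition same_coronal :: "real mat \<Rightarrow> real mat \<Rightarrow> bool" where
  "same_coronal M N \<longleftrightarrow>
     (\<forall>x. \<not> eigenvalue M x \<and> \<not> eigenvalue N x \<longrightarrow> coronal M x = coronal N x)"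

text \<open>Join: vertices of G are 0..<n, vertices of H are shifted to n..<n+m.\<close>
definition join :: "graph \<Rightarrow> graph \<Rightarrow> graph" where
  "join G H = (nverts G + nverts H,
     (\<lambda>i j. if i < nverts G \<and> j < nverts G then adj G i j
            else if nverts G \<le> i \<and> nverts G \<le> j then adj H (i - nverts G) (j - nverts G)
            else True))"

end

theory Submission
  imports Defs
begin


lemma schur1:
  fixes P :: "'a::field mat"
  assumes P: "P \<in> carrier_mat n n" and Q: "Q \<in> carrier_mat n m" and R: "R \<in> carrier_mat m n"
    and S: "S \<in> carrier_mat m m" and Pv: "Pv \<in> carrier_mat n n" and inv: "Pv * P = 1\<^sub>m n"
  shows "det (four_block_mat P Q R S) = det P * det (S - R * Pv * Q)"
proof -
  have RPi: "R * Pv \<in> carrier_mat m n" using R Pv by auto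
  have X: "S - R * Pv * Q \<in> carrier_mat m m" using minus_carrier_mat[OF mult_carrier_mat[OF RPi Q]] by auto
  have "four_block_mat (1\<^sub>m n) (0\<^sub>m n m) (R * Pv) (1\<^sub>m m) * four_block_mat P Q (0\<^sub>m m n) (S - R * Pv * Q)
     = four_block_mat (1\<^sub>m n * P + 0\<^sub>m n m * 0\<^sub>m m n) (1\<^sub>m n * Q + 0\<^sub>m n m * (S - R * Pv * Q))
        (R * Pv * P + 1\<^sub>m m * 0\<^sub>m m n) (R * Pv * Q + 1\<^sub>m m * (S - R * Pv * Q))"
    by (rule mult_four_block_mat[OF one_carrier_mat zero_carrier_mat RPi one_carrier_mat P Q zero_carrier_mat X])
  also have "\<dots> = four_block_mat P Q R S"
  proof (rule cong_four_block_mat)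
    show "1\<^sub>m n * P + 0\<^sub>m n m * 0\<^sub>m m n = P"
      unfolding left_mult_zero_mat[OF zero_carrier_mat] left_mult_one_mat[OF P] by (rule right_add_zero_mat[OF P])
    show "1\<^sub>m n * Q + 0\<^sub>m n m * (S - R * Pv * Q) = Q"
      unfolding left_mult_zero_mat[OF X] left_mult_one_mat[OF Q] by (rule right_add_zero_mat[OF Q])
    have "R * Pv * P = R * (Pv * P)" using R Pv P by (simp add: assoc_mult_mat)
    hence "R * Pv * P = R" using inv R by simp
    thus "R * Pv * P + 1\<^sub>m m * 0\<^sub>m m n = R"
      unfolding left_mult_one_mat[OF zero_carrier_mat] using R by simp
    have RPQ: "R * Pv * Q \<in> carrier_mat m m" using RPi Q by auto
    show "R * Pv * Q + 1\<^sub>m m * (S - R * Pv * Q) = S"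
      by (subst left_mult_one_mat[OF X], rule eq_matI, insert RPQ S X, auto simp: carrier_matD[OF Pv] carrier_matD[OF Q] carrier_matD[OF R] carrier_matD[OF S])
  qed
  finally have eq: "four_block_mat P Q R S = four_block_mat (1\<^sub>m n) (0\<^sub>m n m) (R * Pv) (1\<^sub>m m) * four_block_mat P Q (0\<^sub>m m n) (S - R * Pv * Q)" by simp
  have "det (four_block_mat P Q R S) = det (four_block_mat (1\<^sub>m n) (0\<^sub>m n m) (R * Pv) (1\<^sub>m m)) * det (four_block_mat P Q (0\<^sub>m m n) (S - R * Pv * Q))"
    unfolding eq by (rule det_mult[of _ "n+m"], insert P Q RPi X, auto)
  also have "det (four_block_mat (1\<^sub>m n) (0\<^sub>m n m) (R * Pv) (1\<^sub>m m)) = 1"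
    by (subst det_four_block_mat_upper_right_zero, insert RPi, auto)
  also have "det (four_block_mat P Q (0\<^sub>m m n) (S - R * Pv * Q)) = det P * det (S - R * Pv * Q)"
    by (rule det_four_block_mat_lower_left_zero, insert P Q X, auto)
  finally show ?thesis by simp
qed

lemma schur2:
  fixes P :: "'a::field mat"
  assumes P: "P \<in> carrier_mat n n" and Q: "Q \<in> carrier_mat n m" and R: "R \<in> carrier_mat m n"
    and S: "S \<in> carrier_mat m m" and Si: "Si \<in> carrier_mat m m" and inv: "S * Si = 1\<^sub>m m"
  shows "det (four_block_mat P Q R S) = det (P - Q * Si * R) * det S"
proof -
  have QSi: "Q * Si \<in> carrier_mat n m" using Q Si by auto
  have X: "P - Q * Si * R \<in> carrier_mat n n" using minus_carrier_mat[OF mult_carrier_mat[OF QSi R]] by auto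
  have "four_block_mat (1\<^sub>m n) (Q * Si) (0\<^sub>m m n) (1\<^sub>m m) * four_block_mat (P - Q * Si * R) (0\<^sub>m n m) R S
     = four_block_mat (1\<^sub>m n * (P - Q * Si * R) + Q * Si * R) (1\<^sub>m n * 0\<^sub>m n m + Q * Si * S)
        (0\<^sub>m m n * (P - Q * Si * R) + 1\<^sub>m m * R) (0\<^sub>m m n * 0\<^sub>m n m + 1\<^sub>m m * S)"
    by (rule mult_four_block_mat[OF one_carrier_mat QSi zero_carrier_mat one_carrier_mat X zero_carrier_mat R S])
  also have "\<dots> = four_block_mat P Q R S"
  proof (rule cong_four_block_mat)
    have QSR: "Q * Si * R \<in> carrier_mat n n" using QSi R by auto
    show "1\<^sub>m n * (P - Q * Si * R) + Q * Si * R = P"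
      by (subst left_mult_one_mat[OF X], rule eq_matI, insert QSR P X, auto simp: carrier_matD[OF P] carrier_matD[OF Q] carrier_matD[OF R] carrier_matD[OF Si])
    have "Q * Si * S = Q * (Si * S)" using Q Si S by (simp add: assoc_mult_mat)
    moreover have "Si * S = 1\<^sub>m m" by (rule mat_mult_left_right_inverse[OF S Si inv])
    ultimately have "Q * Si * S = Q" using Q by auto
    thus "1\<^sub>m n * 0\<^sub>m n m + Q * Si * S = Q" using Q by simp
    show "0\<^sub>m m n * (P - Q * Si * R) + 1\<^sub>m m * R = R"
      unfolding left_mult_zero_mat[OF X] left_mult_one_mat[OF R] by (rule left_add_zero_mat[OF R])
    show "0\<^sub>m m n * 0\<^sub>m n m + 1\<^sub>m m * S = S"
      unfolding left_mult_zero_mat[OF zero_carrier_mat] left_mult_one_mat[OF S] by (rule left_add_zero_mat[OF S])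
  qed
  finally have eq: "four_block_mat P Q R S = four_block_mat (1\<^sub>m n) (Q * Si) (0\<^sub>m m n) (1\<^sub>m m) * four_block_mat (P - Q * Si * R) (0\<^sub>m n m) R S" by simp
  have "det (four_block_mat P Q R S) = det (four_block_mat (1\<^sub>m n) (Q * Si) (0\<^sub>m m n) (1\<^sub>m m)) * det (four_block_mat (P - Q * Si * R) (0\<^sub>m n m) R S)"
    unfolding eq by (rule det_mult[of _ "n+m"], insert QSi X R S, auto)
  also have "det (four_block_mat (1\<^sub>m n) (Q * Si) (0\<^sub>m m n) (1\<^sub>m m)) = 1"
    by (subst det_four_block_mat_lower_left_zero, insert QSi, auto)
  also have "det (four_block_mat (P - Q * Si * R) (0\<^sub>m n m) R S) = det (P - Q * Si * R) * det S"
    by (rule det_four_block_mat_upper_right_zero, insert X R S, auto)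
  finally show ?thesis by simp
qed




definition ones_mat :: "nat \<Rightarrow> nat \<Rightarrow> 'a::one mat" where
  "ones_mat a b = mat a b (\<lambda>_. 1)"

definition sumall :: "'a::comm_monoid_add mat \<Rightarrow> 'a" where
  "sumall B = (\<Sum>i<dim_row B. \<Sum>j<dim_col B. B $$ (i,j))"

lemma ones_carrier[simp]: "ones_mat a b \<in> carrier_mat a b"
  unfolding ones_mat_def by auto

lemma ones_dims[simp]: "dim_row (ones_mat a b) = a" "dim_col (ones_mat a b) = b"
  unfolding ones_mat_def by auto

lemma ones_index[simp]: "i < a \<Longrightarrow> j < b \<Longrightarrow> ones_mat a b $$ (i,j) = 1"
  unfolding ones_mat_def by auto

lemma ones_left: 
  fixes B :: "'a::comm_ring_1 mat"
  assumes B: "B \<in> carrier_mat n c" and i: "i < a" and j: "j < c"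
  shows "(ones_mat a n * B) $$ (i,j) = (\<Sum>l<n. B $$ (l,j))"
  using B i j by (simp add: scalar_prod_def lessThan_atLeast0)

lemma ones_prod:
  fixes Pv :: "'a::comm_ring_1 mat"
  assumes Pv: "Pv \<in> carrier_mat n n"
  shows "(k \<cdot>\<^sub>m ones_mat a n) * Pv * (l \<cdot>\<^sub>m ones_mat n b) = (k * l * sumall Pv) \<cdot>\<^sub>m ones_mat a b"
proof (rule eq_matI)
  fix i j assume i: "i < dim_row ((k * l * sumall Pv) \<cdot>\<^sub>m ones_mat a b)"
    and j: "j < dim_col ((k * l * sumall Pv) \<cdot>\<^sub>m ones_mat a b)"
  hence i: "i < a" and j: "j < b" by auto
  have "((k \<cdot>\<^sub>m ones_mat a n) * Pv * (l \<cdot>\<^sub>m ones_mat n b)) $$ (i,j)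
     = (\<Sum>q<n. ((k \<cdot>\<^sub>m ones_mat a n) * Pv) $$ (i,q) * l)"
    using i j Pv by (simp add: scalar_prod_def lessThan_atLeast0)
  also have "\<dots> = (\<Sum>q<n. (\<Sum>p<n. k * Pv $$ (p,q)) * l)"
    using i j Pv by (intro sum.cong refl, simp add: scalar_prod_def lessThan_atLeast0)
  also have "\<dots> = (\<Sum>q<n. \<Sum>p<n. k * l * Pv $$ (p,q))"
    by (simp add: sum_distrib_left sum_distrib_right mult_ac)
  also have "\<dots> = (\<Sum>p<n. \<Sum>q<n. k * l * Pv $$ (p,q))"
    by (rule sum.swap)
  also have "\<dots> = k * l * sumall Pv"
    using Pv unfolding sumall_def by (simp add: sum_distrib_left)
  finally show "((k \<cdot>\<^sub>m ones_mat a n) * Pv * (l \<cdot>\<^sub>m ones_mat n b)) $$ (i,j) = ((k * l * sumall Pv) \<cdot>\<^sub>m ones_mat a b) $$ (i,j)"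
    using i j by simp
qed auto




lemma sumall_one1: "sumall (1\<^sub>m (Suc 0) :: 'a::comm_ring_1 mat) = 1"
  unfolding sumall_def by simp

lemma mdl:
  fixes S :: "'a::field mat"
  assumes S: "S \<in> carrier_mat m m" and Si: "Si \<in> carrier_mat m m" and inv: "S * Si = 1\<^sub>m m"
  shows "det (S - k \<cdot>\<^sub>m ones_mat m m) = det S * (1 - k * sumall Si)"
proof -
  have SiS: "Si * S = 1\<^sub>m m" by (rule mat_mult_left_right_inverse[OF S Si inv])
  let ?M = "four_block_mat S (k \<cdot>\<^sub>m ones_mat m 1) (1 \<cdot>\<^sub>m ones_mat 1 m) (1\<^sub>m 1)"
  have Q: "k \<cdot>\<^sub>m ones_mat m 1 \<in> carrier_mat m 1" by simp
  have R: "(1::'a) \<cdot>\<^sub>m ones_mat 1 m \<in> carrier_mat 1 m" by simp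
  have "det ?M = det S * det (1\<^sub>m 1 - (1 \<cdot>\<^sub>m ones_mat 1 m) * Si * (k \<cdot>\<^sub>m ones_mat m 1))"
    by (rule schur1[OF S Q R one_carrier_mat Si SiS])
  also have "(1 \<cdot>\<^sub>m ones_mat 1 m) * Si * (k \<cdot>\<^sub>m ones_mat m 1) = (1 * k * sumall Si) \<cdot>\<^sub>m ones_mat 1 1"
    by (rule ones_prod[OF Si])
  also have "det (1\<^sub>m 1 - (1 * k * sumall Si) \<cdot>\<^sub>m ones_mat 1 1) = 1 - k * sumall Si"
    by (subst det_single, auto)
  finally have 1: "det ?M = det S * (1 - k * sumall Si)" .
  have "det ?M = det (S - (k \<cdot>\<^sub>m ones_mat m 1) * 1\<^sub>m 1 * (1 \<cdot>\<^sub>m ones_mat 1 m)) * det (1\<^sub>m 1 :: 'a mat)"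
    by (rule schur2[OF S Q R one_carrier_mat one_carrier_mat], simp)
  also have "(k \<cdot>\<^sub>m ones_mat m 1) * 1\<^sub>m 1 * (1 \<cdot>\<^sub>m ones_mat 1 m) = (k * 1 * sumall (1\<^sub>m 1 :: 'a mat)) \<cdot>\<^sub>m ones_mat m m"
    by (rule ones_prod, simp)
  finally have 2: "det ?M = det (S - k \<cdot>\<^sub>m ones_mat m m)" by (simp add: sumall_one1)
  show ?thesis using 1 2 by simp
qed




lemma A_alpha_carrier[simp]: "A_alpha a G \<in> carrier_mat (nverts G) (nverts G)"
  unfolding A_alpha_def deg_matrix_def adj_matrix_def by auto

lemma poly_char: assumes A: "(A :: 'a::field mat) \<in> carrier_mat n n"
  shows "poly (char_poly A) x = det (x \<cdot>\<^sub>m 1\<^sub>m n - A)"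
proof -
  have "- (char_matrix A x) = x \<cdot>\<^sub>m 1\<^sub>m n - A"
    by (rule eq_matI, insert A, auto simp: char_matrix_def)
  thus ?thesis using char_poly_matrix[OF A, of x] by simp
qed

lemma join_simps: "nverts (join G H) = nverts G + nverts H"
  "adj (join G H) = (\<lambda>i j. if i < nverts G \<and> j < nverts G then adj G i j
            else if nverts G \<le> i \<and> nverts G \<le> j then adj H (i - nverts G) (j - nverts G)
            else True)"
  unfolding join_def nverts_def adj_def by auto

lemma degree_join_left: assumes i: "i < nverts G"
  shows "degree (join G H) i = degree G i + nverts H"
proof -
  let ?n = "nverts G" let ?m = "nverts H"
  have "{j. j < nverts (join G H) \<and> adj (join G H) i j} = {j. j < ?n \<and> adj G i j} \<union> {?n..<?n+?m}"
    using i unfolding join_simps by auto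
  moreover have "card ({j. j < ?n \<and> adj G i j} \<union> {?n..<?n+?m}) = card {j. j < ?n \<and> adj G i j} + ?m"
    by (subst card_Un_disjoint, auto)
  ultimately show ?thesis unfolding degree_def by simp
qed

lemma degree_join_right: assumes i: "nverts G \<le> i" "i < nverts G + nverts H"
  shows "degree (join G H) i = degree H (i - nverts G) + nverts G"
proof -
  let ?n = "nverts G" let ?m = "nverts H"
  have "{j. j < nverts (join G H) \<and> adj (join G H) i j} = {..<?n} \<union> (\<lambda>j. j + ?n) ` {j. j < ?m \<and> adj H (i - ?n) j}"
    using i unfolding join_simps
    by (auto simp: image_iff, metis add_diff_inverse_nat add.commute less_diff_conv2 not_less)
  moreover have "card ({..<?n} \<union> (\<lambda>j. j + ?n) ` {j. j < ?m \<and> adj H (i - ?n) j}) = ?n + card {j. j < ?m \<and> adj H (i - ?n) j}"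
    by (subst card_Un_disjoint, auto simp: card_image inj_on_def)
  ultimately show ?thesis unfolding degree_def by simp
qed

lemma char_join:
  fixes a x :: real and G H :: graph
  defines "n \<equiv> nverts G" and "m \<equiv> nverts H"
  shows "x \<cdot>\<^sub>m 1\<^sub>m (n+m) - A_alpha a (join G H) =
    four_block_mat ((x - a * m) \<cdot>\<^sub>m 1\<^sub>m n - A_alpha a G) ((-(1-a)) \<cdot>\<^sub>m ones_mat n m)
      ((-(1-a)) \<cdot>\<^sub>m ones_mat m n) ((x - a * n) \<cdot>\<^sub>m 1\<^sub>m m - A_alpha a H)"
proof (rule eq_matI)
  have d: "dim_row (A_alpha a G) = n" "dim_col (A_alpha a G) = n"
     "dim_row (A_alpha a H) = m" "dim_col (A_alpha a H) = m"
     "dim_row (A_alpha a (join G H)) = n + m" "dim_col (A_alpha a (join G H)) = n + m"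
    using carrier_matD[OF A_alpha_carrier[of a G]] carrier_matD[OF A_alpha_carrier[of a H]]
      carrier_matD[OF A_alpha_carrier[of a "join G H"]]
    unfolding n_def m_def join_simps by auto
  show "dim_row (x \<cdot>\<^sub>m 1\<^sub>m (n+m) - A_alpha a (join G H)) = dim_row (four_block_mat ((x - a * m) \<cdot>\<^sub>m 1\<^sub>m n - A_alpha a G) ((-(1-a)) \<cdot>\<^sub>m ones_mat n m)
      ((-(1-a)) \<cdot>\<^sub>m ones_mat m n) ((x - a * n) \<cdot>\<^sub>m 1\<^sub>m m - A_alpha a H))" using d by simp
  show "dim_col (x \<cdot>\<^sub>m 1\<^sub>m (n+m) - A_alpha a (join G H)) = dim_col (four_block_mat ((x - a * m) \<cdot>\<^sub>m 1\<^sub>m n - A_alpha a G) ((-(1-a)) \<cdot>\<^sub>m ones_mat n m)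
      ((-(1-a)) \<cdot>\<^sub>m ones_mat m n) ((x - a * n) \<cdot>\<^sub>m 1\<^sub>m m - A_alpha a H))" using d by simp
  fix i j assume "i < dim_row (four_block_mat ((x - a * m) \<cdot>\<^sub>m 1\<^sub>m n - A_alpha a G) ((-(1-a)) \<cdot>\<^sub>m ones_mat n m)
      ((-(1-a)) \<cdot>\<^sub>m ones_mat m n) ((x - a * n) \<cdot>\<^sub>m 1\<^sub>m m - A_alpha a H))"
    "j < dim_col (four_block_mat ((x - a * m) \<cdot>\<^sub>m 1\<^sub>m n - A_alpha a G) ((-(1-a)) \<cdot>\<^sub>m ones_mat n m)
      ((-(1-a)) \<cdot>\<^sub>m ones_mat m n) ((x - a * n) \<cdot>\<^sub>m 1\<^sub>m m - A_alpha a H))"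
  hence i: "i < n + m" and j: "j < n + m" using d by auto
  have jn: "nverts (join G H) = n + m" unfolding n_def m_def join_simps ..
  show "(x \<cdot>\<^sub>m 1\<^sub>m (n+m) - A_alpha a (join G H)) $$ (i,j) = (four_block_mat ((x - a * m) \<cdot>\<^sub>m 1\<^sub>m n - A_alpha a G) ((-(1-a)) \<cdot>\<^sub>m ones_mat n m)
      ((-(1-a)) \<cdot>\<^sub>m ones_mat m n) ((x - a * n) \<cdot>\<^sub>m 1\<^sub>m m - A_alpha a H)) $$ (i,j)"
  proof (cases "i < n")
    case True
    then show ?thesis using i j degree_join_left[of i G H]
      unfolding A_alpha_def deg_matrix_def adj_matrix_def jn
      by (auto simp: join_simps n_def m_def algebra_simps)
  next
    case False
    then show ?thesis using i j degree_join_right[of G i H]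
      unfolding A_alpha_def deg_matrix_def adj_matrix_def jn
      by (auto simp: join_simps n_def m_def algebra_simps)
  qed
qed




lemma inv_exists:
  fixes P :: "'a::field mat"
  assumes P: "P \<in> carrier_mat n n" and d: "det P \<noteq> 0"
  shows "\<exists>B. mat_inverse P = Some B \<and> P * B = 1\<^sub>m n \<and> B * P = 1\<^sub>m n \<and> B \<in> carrier_mat n n"
proof (cases "mat_inverse P")
  case None
  from mat_inverse(1)[OF P None, where b="()"] det_non_zero_imp_unit[OF P d, where b="()"]
  show ?thesis by blast
next
  case (Some B)
  thus ?thesis using mat_inverse(2)[OF P Some] by auto
qed

lemma coronal_sumall:
  assumes M: "M \<in> carrier_mat n n" and inv: "mat_inverse (y \<cdot>\<^sub>m 1\<^sub>m n - M) = Some B"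
    and B: "B \<in> carrier_mat n n"
  shows "coronal M y = sumall B"
proof -
  have dr: "dim_row M = n" using M by auto
  show ?thesis unfolding coronal_def dr inv using B
    by (simp add: scalar_prod_def sumall_def mult_mat_vec_def lessThan_atLeast0)
qed

lemma join_det:
  fixes a x :: real and G H :: graph
  defines "n \<equiv> nverts G" and "m \<equiv> nverts H"
  assumes dP: "det ((x - a * m) \<cdot>\<^sub>m 1\<^sub>m n - A_alpha a G) \<noteq> 0"
    and dS: "det ((x - a * n) \<cdot>\<^sub>m 1\<^sub>m m - A_alpha a H) \<noteq> 0"
  shows "det (x \<cdot>\<^sub>m 1\<^sub>m (n+m) - A_alpha a (join G H)) =
    det ((x - a * m) \<cdot>\<^sub>m 1\<^sub>m n - A_alpha a G) * det ((x - a * n) \<cdot>\<^sub>m 1\<^sub>m m - A_alpha a H)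
    * (1 - (1-a)^2 * coronal (A_alpha a G) (x - a * m) * coronal (A_alpha a H) (x - a * n))"
proof -
  define P where "P = (x - a * m) \<cdot>\<^sub>m 1\<^sub>m n - A_alpha a G"
  define S where "S = (x - a * n) \<cdot>\<^sub>m 1\<^sub>m m - A_alpha a H"
  have AG: "A_alpha a G \<in> carrier_mat n n" unfolding n_def by simp
  have AH: "A_alpha a H \<in> carrier_mat m m" unfolding m_def by simp
  have P: "P \<in> carrier_mat n n" unfolding P_def using AG by auto
  have S: "S \<in> carrier_mat m m" unfolding S_def using AH by auto
  obtain Pv where Pv: "mat_inverse P = Some Pv" "P * Pv = 1\<^sub>m n" "Pv * P = 1\<^sub>m n" "Pv \<in> carrier_mat n n"
    using inv_exists[OF P dP[folded P_def]] by blast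
  obtain Si where Si: "mat_inverse S = Some Si" "S * Si = 1\<^sub>m m" "Si * S = 1\<^sub>m m" "Si \<in> carrier_mat m m"
    using inv_exists[OF S dS[folded S_def]] by blast
  have cP: "coronal (A_alpha a G) (x - a * m) = sumall Pv"
    by (rule coronal_sumall[OF AG _ Pv(4)], use Pv(1) P_def in simp)
  have cS: "coronal (A_alpha a H) (x - a * n) = sumall Si"
    by (rule coronal_sumall[OF AH _ Si(4)], use Si(1) S_def in simp)
  have Q: "(-(1-a)) \<cdot>\<^sub>m ones_mat n m \<in> carrier_mat n m" by simp
  have R: "(-(1-a)) \<cdot>\<^sub>m ones_mat m n \<in> carrier_mat m n" by simp
  have "det (x \<cdot>\<^sub>m 1\<^sub>m (n+m) - A_alpha a (join G H)) = det (four_block_mat P ((-(1-a)) \<cdot>\<^sub>m ones_mat n m)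
      ((-(1-a)) \<cdot>\<^sub>m ones_mat m n) S)"
    unfolding P_def S_def n_def m_def by (subst char_join, simp)
  also have "\<dots> = det P * det (S - ((-(1-a)) \<cdot>\<^sub>m ones_mat m n) * Pv * ((-(1-a)) \<cdot>\<^sub>m ones_mat n m))"
    by (rule schur1[OF P Q R S Pv(4) Pv(3)])
  also have "((-(1-a)) \<cdot>\<^sub>m ones_mat m n) * Pv * ((-(1-a)) \<cdot>\<^sub>m ones_mat n m) = ((-(1-a)) * (-(1-a)) * sumall Pv) \<cdot>\<^sub>m ones_mat m m"
    by (rule ones_prod[OF Pv(4)])
  also have "det (S - ((-(1-a)) * (-(1-a)) * sumall Pv) \<cdot>\<^sub>m ones_mat m m) = det S * (1 - ((-(1-a)) * (-(1-a)) * sumall Pv) * sumall Si)"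
    by (rule mdl[OF S Si(4) Si(2)])
  also have "(-(1-a)) * (-(1-a)) = (1-a)^2" by (simp add: power2_eq_square algebra_simps)
  finally show ?thesis unfolding P_def[symmetric] S_def[symmetric] cP cS by (simp add: mult_ac)
qed




lemma cospec_facts:
  assumes "A_alpha_cospectral a G1 G2"
  shows "nverts G1 = nverts G2 \<and> char_poly (A_alpha a G1) = char_poly (A_alpha a G2)"
proof -
  define cp where "cp G = char_poly (map_mat complex_of_real (A_alpha a G))" for G
  have hom: "cp G = map_poly of_real (char_poly (A_alpha a G))" for G
    unfolding cp_def by (rule of_real_hom.char_poly_hom[OF A_alpha_carrier])
  have mc: "map_mat complex_of_real (A_alpha a G) \<in> carrier_mat (nverts G) (nverts G)" for G
    by simp
  have dm: "Polynomial.degree (cp G) = nverts G \<and> coeff (cp G) (nverts G) = 1" for G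
    unfolding cp_def by (rule degree_monic_char_poly[OF mc])
  have lc: "lead_coeff (cp G) = 1" for G using dm[of G] by simp
  have dec: "cp G = (\<Prod>x\<in>#proots (cp G). [:-x, 1:])" for G
    using complex_poly_decompose_multiset[of "cp G"] lc[of G] by simp
  have "proots (cp G1) = proots (cp G2)"
    using assms unfolding A_alpha_cospectral_def eigenvalues_def cp_def by simp
  hence eq: "cp G1 = cp G2" using dec[of G1] dec[of G2] by metis
  hence n: "nverts G1 = nverts G2" using dm[of G1] dm[of G2] by simp
  have "char_poly (A_alpha a G1) = char_poly (A_alpha a G2)"
  proof (rule poly_eqI)
    fix i
    have "complex_of_real (coeff (char_poly (A_alpha a G1)) i) = complex_of_real (coeff (char_poly (A_alpha a G2)) i)"
      using arg_cong[OF eq, of "\<lambda>p. coeff p i"] unfolding hom by (simp add: coeff_map_poly)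
    thus "coeff (char_poly (A_alpha a G1)) i = coeff (char_poly (A_alpha a G2)) i" by simp
  qed
  with n show ?thesis by simp
qed

lemma finite_shift_roots:
  fixes p :: "real poly"
  assumes "p \<noteq> 0"
  shows "finite {x. poly p (x - c) = 0}"
proof -
  have "{x. poly p (x - c) = 0} = (\<lambda>y. y + c) ` {y. poly p y = 0}"
    by (auto simp: image_iff, metis diff_add_cancel)
  thus ?thesis using poly_roots_finite[OF assms] by simp
qed

lemma char_poly_nz: "char_poly (A_alpha a G) \<noteq> 0"
  using degree_monic_char_poly[OF A_alpha_carrier[of a G]] by auto

lemma part_b:
  assumes cG: "A_alpha_cospectral a G1 G2" and sG: "same_coronal (A_alpha a G1) (A_alpha a G2)"
    and cH: "A_alpha_cospectral a H1 H2" and sH: "same_coronal (A_alpha a H1) (A_alpha a H2)"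
  shows "A_alpha_cospectral a (join G1 H1) (join G2 H2)"
proof -
  define n where "n = nverts G1"
  define m where "m = nverts H1"
  have n2: "nverts G2 = n" and pG: "char_poly (A_alpha a G1) = char_poly (A_alpha a G2)"
    using cospec_facts[OF cG] unfolding n_def by auto
  have m2: "nverts H2 = m" and pH: "char_poly (A_alpha a H1) = char_poly (A_alpha a H2)"
    using cospec_facts[OF cH] unfolding m_def by auto
  define p where "p = char_poly (A_alpha a G1)"
  define q where "q = char_poly (A_alpha a H1)"
  define J1 where "J1 = char_poly (A_alpha a (join G1 H1))"
  define J2 where "J2 = char_poly (A_alpha a (join G2 H2))"
  have J1c: "A_alpha a (join G1 H1) \<in> carrier_mat (n+m) (n+m)"
    using A_alpha_carrier[of a "join G1 H1"] unfolding join_simps n_def m_def .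
  have J2c: "A_alpha a (join G2 H2) \<in> carrier_mat (n+m) (n+m)"
    using A_alpha_carrier[of a "join G2 H2"] unfolding join_simps n2 m2 .
  have G1c: "A_alpha a G1 \<in> carrier_mat n n" unfolding n_def by simp
  have G2c: "A_alpha a G2 \<in> carrier_mat n n" using A_alpha_carrier[of a G2] unfolding n2 .
  have H1c: "A_alpha a H1 \<in> carrier_mat m m" unfolding m_def by simp
  have H2c: "A_alpha a H2 \<in> carrier_mat m m" using A_alpha_carrier[of a H2] unfolding m2 .
  have agree: "poly J1 x = poly J2 x" if x: "poly p (x - a * m) \<noteq> 0" "poly q (x - a * n) \<noteq> 0" for x
  proof -
    have dP1: "det ((x - a * m) \<cdot>\<^sub>m 1\<^sub>m n - A_alpha a G1) = poly p (x - a * m)"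
      unfolding p_def by (rule poly_char[OF G1c, symmetric])
    have dP2: "det ((x - a * m) \<cdot>\<^sub>m 1\<^sub>m n - A_alpha a G2) = poly p (x - a * m)"
      unfolding p_def pG by (rule poly_char[OF G2c, symmetric])
    have dS1: "det ((x - a * n) \<cdot>\<^sub>m 1\<^sub>m m - A_alpha a H1) = poly q (x - a * n)"
      unfolding q_def by (rule poly_char[OF H1c, symmetric])
    have dS2: "det ((x - a * n) \<cdot>\<^sub>m 1\<^sub>m m - A_alpha a H2) = poly q (x - a * n)"
      unfolding q_def pH by (rule poly_char[OF H2c, symmetric])
    have cg: "coronal (A_alpha a G1) (x - a * m) = coronal (A_alpha a G2) (x - a * m)"
      using sG x(1) unfolding same_coronal_def p_def
      eigenvalue_root_char_poly[OF G1c] eigenvalue_root_char_poly[OF G2c] pG by auto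
    have ch: "coronal (A_alpha a H1) (x - a * n) = coronal (A_alpha a H2) (x - a * n)"
      using sH x(2) unfolding same_coronal_def q_def
      eigenvalue_root_char_poly[OF H1c] eigenvalue_root_char_poly[OF H2c] pH by auto
    have "poly J1 x = det (x \<cdot>\<^sub>m 1\<^sub>m (n+m) - A_alpha a (join G1 H1))"
      unfolding J1_def by (rule poly_char[OF J1c])
    also have "\<dots> = poly p (x - a * m) * poly q (x - a * n)
       * (1 - (1-a)^2 * coronal (A_alpha a G1) (x - a * m) * coronal (A_alpha a H1) (x - a * n))"
      using join_det[where x=x and a=a and G=G1 and H=H1] dP1 dS1 x unfolding n_def m_def by simp
    also have "\<dots> = det (x \<cdot>\<^sub>m 1\<^sub>m (n+m) - A_alpha a (join G2 H2))"
      using join_det[where x=x and a=a and G=G2 and H=H2] dP2 dS2 x cg ch unfolding n2 m2 by simp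
    also have "\<dots> = poly J2 x"
      unfolding J2_def by (rule poly_char[OF J2c, symmetric])
    finally show ?thesis .
  qed
  have J: "J1 = J2"
  proof (rule ccontr)
    assume ne: "J1 \<noteq> J2"
    hence "J1 - J2 \<noteq> 0" by simp
    have fin: "finite ({x. poly p (x - a * m) = 0} \<union> {x. poly q (x - a * n) = 0} \<union> {x. poly (J1 - J2) x = 0})"
      using finite_shift_roots[OF char_poly_nz[of a G1, folded p_def]]
        finite_shift_roots[OF char_poly_nz[of a H1, folded q_def]]
        poly_roots_finite[OF \<open>J1 - J2 \<noteq> 0\<close>] by simp
    obtain x where "x \<notin> {x. poly p (x - a * m) = 0} \<union> {x. poly q (x - a * n) = 0} \<union> {x. poly (J1 - J2) x = 0}"
      using ex_new_if_finite[OF infinite_UNIV_char_0 fin] by blast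
    thus False using agree[of x] by simp
  qed
  show ?thesis unfolding A_alpha_cospectral_def eigenvalues_def
    of_real_hom.char_poly_hom[OF J1c] of_real_hom.char_poly_hom[OF J2c]
    using J unfolding J1_def J2_def by simp
qed

theorem corollary3p2:
  fixes \<alpha> :: real
  assumes "0 \<le> \<alpha>" and "\<alpha> \<le> 1"
  shows "(\<forall>G H1 H2. simple_graph G \<and> simple_graph H1 \<and> simple_graph H2 \<and>
            A_alpha_cospectral \<alpha> H1 H2 \<and> same_coronal (A_alpha \<alpha> H1) (A_alpha \<alpha> H2)
            \<longrightarrow> A_alpha_cospectral \<alpha> (join G H1) (join G H2))
       \<and> (\<forall>G1 G2 H1 H2. simple_graph G1 \<and> simple_graph G2 \<and> simple_graph H1 \<and> simple_graph H2 \<and>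
            A_alpha_cospectral \<alpha> G1 G2 \<and> same_coronal (A_alpha \<alpha> G1) (A_alpha \<alpha> G2) \<and>
            A_alpha_cospectral \<alpha> H1 H2 \<and> same_coronal (A_alpha \<alpha> H1) (A_alpha \<alpha> H2)
            \<longrightarrow> A_alpha_cospectral \<alpha> (join G1 H1) (join G2 H2))"
proof (intro conjI allI impI)
  fix G H1 H2
  assume h: "simple_graph G \<and> simple_graph H1 \<and> simple_graph H2 \<and>
            A_alpha_cospectral \<alpha> H1 H2 \<and> same_coronal (A_alpha \<alpha> H1) (A_alpha \<alpha> H2)"
  show "A_alpha_cospectral \<alpha> (join G H1) (join G H2)"
    using h by (intro part_b) (auto simp: A_alpha_cospectral_def same_coronal_def)
next
  fix G1 G2 H1 H2
  assume "simple_graph G1 \<and> simple_graph G2 \<and> simple_graph H1 \<and> simple_graph H2 \<and>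
            A_alpha_cospectral \<alpha> G1 G2 \<and> same_coronal (A_alpha \<alpha> G1) (A_alpha \<alpha> G2) \<and>
            A_alpha_cospectral \<alpha> H1 H2 \<and> same_coronal (A_alpha \<alpha> H1) (A_alpha \<alpha> H2)"
  thus "A_alpha_cospectral \<alpha> (join G1 H1) (join G2 H2)" using part_b by blast
qed


end
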